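(* For every even $N\ge2$, the eigenvalue $r_{1,N}(z)$ has a pole of order $2N$ at $z=1$ and the eigenvalue $r_{2,N}(z)$ has a zero of order $2N$ at $z=1$.
   Context: Fix $0<\alpha,\beta<1$. For $\varepsilon\in(0,1)$: $\phi_{\varepsilon,1}(z)=\begin{pmatrix}1&\varepsilon^2z^{-1}\\ \varepsilon^{-2}&1\end{pmatrix}$, $\phi_{\varepsilon,2}(z)=\frac{1}{1-z^{-1}}\phi_{\varepsilon,1}(z)$, $\phi_3(z)=\begin{pmatrix}1&z^{-1}\\1&1\end{pmatrix}$, $\phi_4(z)=\frac{1}{1-z^{-1}}\phi_3(z)$, $\Phi_\varepsilon=\phi_{\varepsilon,1}\phi_{\varepsilon,2}\phi_3\phi_4$. Let $\phi_N(z)=\Phi_\alpha(z)^{N/2}\Phi_\beta(z)^{N/2}$ (determinant $1$), $t_N=\operatorname{tr}\phi_N$; in a punctured neighborhood of $1$, $r_{1,N}=\frac12(t_N+\sqrt{t_N^2-4})$, $r_{2,N}=\frac12(t_N-\sqrt{t_N^2-4})$ where $\sqrt{t^2-4}=t(1-4/t^2)^{1/2}$ (principal branch, valid for $|t|$ large). *)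

theory Defs
  imports "HOL-Complex_Analysis.Complex_Analysis"
begin

text \<open>2x2 complex matrices, represented as complex^2^2 (rows indexed by 1,2).\<close>
definition mat2 :: "complex \<Rightarrow> complex \<Rightarrow> complex \<Rightarrow> complex \<Rightarrow> complex^2^2" where
  "mat2 a b c d = (\<chi> i j. if i = 1 then (if j = 1 then a else b) else (if j = 1 then c else d))"

primrec mpow :: "complex^2^2 \<Rightarrow> nat \<Rightarrow> complex^2^2" where
  "mpow A 0 = mat 1"
| "mpow A (Suc n) = A ** mpow A n"

definition phi1 :: "real \<Rightarrow> complex \<Rightarrow> complex^2^2" where
  "phi1 e z = mat2 1 (complex_of_real e ^ 2 * inverse z) (inverse (complex_of_real e ^ 2)) 1"

definition phi2 :: "real \<Rightarrow> complex \<Rightarrow> complex^2^2" where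
  "phi2 e z = (\<chi> i j. (1 / (1 - inverse z)) * (phi1 e z) $ i $ j)"

definition phi3 :: "complex \<Rightarrow> complex^2^2" where
  "phi3 z = mat2 1 (inverse z) 1 1"

definition phi4 :: "complex \<Rightarrow> complex^2^2" where
  "phi4 z = (\<chi> i j. (1 / (1 - inverse z)) * (phi3 z) $ i $ j)"

definition Phi :: "real \<Rightarrow> complex \<Rightarrow> complex^2^2" where
  "Phi e z = phi1 e z ** phi2 e z ** phi3 z ** phi4 z"

definition phiN :: "real \<Rightarrow> real \<Rightarrow> nat \<Rightarrow> complex \<Rightarrow> complex^2^2" where
  "phiN a b N z = mpow (Phi a z) (N div 2) ** mpow (Phi b z) (N div 2)"

definition tN :: "real \<Rightarrow> real \<Rightarrow> nat \<Rightarrow> complex \<Rightarrow> complex" where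
  "tN a b N z = trace (phiN a b N z)"

text \<open>sqrt(t^2-4) := t * (1 - 4/t^2)^(1/2), principal branch (csqrt).\<close>
definition r1N :: "real \<Rightarrow> real \<Rightarrow> nat \<Rightarrow> complex \<Rightarrow> complex" where
  "r1N a b N z = (tN a b N z + tN a b N z * csqrt (1 - 4 / (tN a b N z)^2)) / 2"

definition r2N :: "real \<Rightarrow> real \<Rightarrow> nat \<Rightarrow> complex \<Rightarrow> complex" where
  "r2N a b N z = (tN a b N z - tN a b N z * csqrt (1 - 4 / (tN a b N z)^2)) / 2"

end

theory Submission
  imports Defs
begin

definition smul :: "complex \<Rightarrow> complex^2^2 \<Rightarrow> complex^2^2" where
  "smul c M = (\<chi> i j. c * M$i$j)"

lemma smul_nth[simp]: "smul c M $ i $ j = c * M$i$j" by (simp add: smul_def)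
lemma smul_smul[simp]: "smul a (smul b M) = smul (a*b) M" by (simp add: vec_eq_iff)
lemma smul_one[simp]: "smul 1 M = M" by (simp add: vec_eq_iff)
lemma smul_mult_left[simp]: "smul a A ** B = smul a (A ** B)"
  by (simp add: vec_eq_iff matrix_matrix_mult_def sum_distrib_left mult.assoc)
lemma smul_mult_right[simp]: "A ** smul a B = smul a (A ** B)"
  by (simp add: vec_eq_iff matrix_matrix_mult_def sum_distrib_left mult.left_commute)
lemma mpow_smul: "mpow (smul c A) k = smul (c^k) (mpow A k)"
  by (induction k) (simp_all add: mult.commute)
lemma trace_smul: "trace (smul c A) = c * trace A"
  by (simp add: trace_def sum_distrib_left)

lemma mat2_nth: "mat2 a b c d $ i $ j = (if i = 1 then (if j = 1 then a else b) else (if j = 1 then c else d))"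
  by (simp add: mat2_def)

lemma all2: "(\<forall>i::2. P i) \<longleftrightarrow> P 1 \<and> P 2"
  by (metis exhaust_2)

definition Z1 :: "real \<Rightarrow> complex \<Rightarrow> complex^2^2" where
  "Z1 e z = mat2 z (complex_of_real e ^ 2) (z / complex_of_real e ^ 2) z"
definition Z3 :: "complex \<Rightarrow> complex^2^2" where
  "Z3 z = mat2 z 1 z z"
definition B :: "real \<Rightarrow> complex \<Rightarrow> complex^2^2" where
  "B e z = smul (1/z^2) (Z1 e z ** Z1 e z ** Z3 z ** Z3 z)"
definition G :: "real \<Rightarrow> real \<Rightarrow> nat \<Rightarrow> complex \<Rightarrow> complex" where
  "G a b k z = trace (mpow (B a z) k ** mpow (B b z) k)"

lemma phi1_eq: "z \<noteq> 0 \<Longrightarrow> phi1 e z = smul (1/z) (Z1 e z)"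
  by (simp add: vec_eq_iff all2 phi1_def Z1_def mat2_nth field_simps)
lemma phi3_eq: "z \<noteq> 0 \<Longrightarrow> phi3 z = smul (1/z) (Z3 z)"
  by (simp add: vec_eq_iff all2 phi3_def Z3_def mat2_nth field_simps)
lemma phi2_eq: "z \<noteq> 0 \<Longrightarrow> z \<noteq> 1 \<Longrightarrow> phi2 e z = smul (1/(z-1)) (Z1 e z)"
proof -
  assume z: "z \<noteq> 0" "z \<noteq> 1"
  have "phi2 e z = smul (1/(1 - inverse z)) (phi1 e z)" by (simp add: phi2_def smul_def)
  also have "\<dots> = smul (1/(z-1)) (Z1 e z)" using z by (simp add: phi1_eq field_simps)
  finally show ?thesis .
qed
lemma phi4_eq: "z \<noteq> 0 \<Longrightarrow> z \<noteq> 1 \<Longrightarrow> phi4 z = smul (1/(z-1)) (Z3 z)"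
proof -
  assume z: "z \<noteq> 0" "z \<noteq> 1"
  have "phi4 z = smul (1/(1 - inverse z)) (phi3 z)" by (simp add: phi4_def smul_def)
  also have "\<dots> = smul (1/(z-1)) (Z3 z)" using z by (simp add: phi3_eq field_simps)
  finally show ?thesis .
qed
lemma Phi_eq: "z \<noteq> 0 \<Longrightarrow> z \<noteq> 1 \<Longrightarrow> Phi e z = smul (1/(z-1)^2) (B e z)"
  by (simp add: Phi_def phi1_eq phi2_eq phi3_eq phi4_eq B_def field_simps power2_eq_square)

lemma tN_eq: assumes "z \<noteq> 0" "z \<noteq> 1" "N = 2*k"
  shows "tN a b N z = G a b k z / (z-1)^(2*N)"
proof -
  have "tN a b N z = trace (smul ((1/(z-1)^2)^k * (1/(z-1)^2)^k) (mpow (B a z) k ** mpow (B b z) k))"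
    using assms by (simp add: tN_def phiN_def Phi_eq mpow_smul)
  also have "\<dots> = G a b k z / (z-1)^(2*N)"
    by (simp add: trace_smul G_def assms(3) power_mult_distrib field_simps flip: power_add power_mult)
  finally show ?thesis .
qed

definition hol :: "complex set \<Rightarrow> (complex \<Rightarrow> complex^2^2) \<Rightarrow> bool" where
  "hol S M = (\<forall>i j. (\<lambda>z. M z $ i $ j) holomorphic_on S)"

lemma hol_mult: "hol S A \<Longrightarrow> hol S C \<Longrightarrow> hol S (\<lambda>z. A z ** C z)"
  unfolding hol_def matrix_matrix_mult_def by (auto intro!: holomorphic_intros)
lemma hol_one: "hol S (\<lambda>z. mat 1)"
  unfolding hol_def mat_def by auto
lemma hol_mpow: "hol S A \<Longrightarrow> hol S (\<lambda>z. mpow (A z) k)"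
  by (induction k) (auto intro: hol_mult hol_one)
lemma hol_smul: "c holomorphic_on S \<Longrightarrow> hol S A \<Longrightarrow> hol S (\<lambda>z. smul (c z) (A z))"
  unfolding hol_def by (auto intro!: holomorphic_intros)
lemma hol_mat2: "a holomorphic_on S \<Longrightarrow> b holomorphic_on S \<Longrightarrow> c holomorphic_on S \<Longrightarrow> d holomorphic_on S
   \<Longrightarrow> hol S (\<lambda>z. mat2 (a z) (b z) (c z) (d z))"
  unfolding hol_def mat2_nth
proof (intro allI)
  fix i j :: 2
  assume "a holomorphic_on S" "b holomorphic_on S" "c holomorphic_on S" "d holomorphic_on S"
  then show "(\<lambda>z. if i = 1 then if j = 1 then a z else b z else if j = 1 then c z else d z) holomorphic_on S"
    by (cases "i = 1"; cases "j = 1") auto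
qed
lemma hol_trace: "hol S A \<Longrightarrow> (\<lambda>z. trace (A z)) holomorphic_on S"
  unfolding hol_def trace_def by (auto intro!: holomorphic_intros)

lemma hol_B: "hol (-{0}) (\<lambda>z. B e z)"
  unfolding B_def Z1_def Z3_def
  by (intro hol_smul hol_mult hol_mat2) (auto intro!: holomorphic_intros)

lemma G_holo: "G a b k holomorphic_on (-{0})"
  unfolding G_def by (intro hol_trace hol_mult hol_mpow hol_B)

definition pos :: "complex \<Rightarrow> bool" where "pos x = (Im x = 0 \<and> 0 < Re x)"
definition pm :: "complex^2^2 \<Rightarrow> bool" where "pm M = (\<forall>i j. pos (M $ i $ j))"

lemma pos_add: "pos a \<Longrightarrow> pos b \<Longrightarrow> pos (a+b)" by (simp add: pos_def)
lemma pos_mult: "pos a \<Longrightarrow> pos b \<Longrightarrow> pos (a*b)" by (simp add: pos_def)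
lemma pm_mult: "pm A \<Longrightarrow> pm C \<Longrightarrow> pm (A ** C)"
  unfolding pm_def matrix_matrix_mult_def by (auto simp: sum_2 intro!: pos_add pos_mult)
lemma pm_mpow: "pm A \<Longrightarrow> pm (mpow A (Suc k))"
proof (induction k)
  case 0 then show ?case by simp
next
  case (Suc k) then show ?case using pm_mult[of A "mpow A (Suc k)"] by simp
qed
lemma pm_smul: "pos c \<Longrightarrow> pm A \<Longrightarrow> pm (smul c A)"
  unfolding pm_def by (auto intro: pos_mult)
lemma pm_mat2: "pos a \<Longrightarrow> pos b \<Longrightarrow> pos c \<Longrightarrow> pos d \<Longrightarrow> pm (mat2 a b c d)"
  unfolding pm_def mat2_nth by auto
lemma pm_trace: "pm A \<Longrightarrow> trace A \<noteq> 0"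
  unfolding pm_def trace_def sum_2 pos_def
  by (metis add_pos_pos less_irrefl plus_complex.sel(1) zero_complex.sel(1))

lemma pm_B1: "e \<noteq> 0 \<Longrightarrow> pm (B e 1)"
proof -
  assume e: "e \<noteq> 0"
  have p: "pos (complex_of_real e ^ 2)" "pos (1 / complex_of_real e ^ 2)"
    using e by (simp_all add: pos_def flip: of_real_power of_real_divide)
  have p1: "pos 1" by (simp add: pos_def)
  show ?thesis unfolding B_def Z1_def Z3_def
    by (intro pm_smul pm_mult pm_mat2) (use p p1 in auto)
qed

lemma G1_ne: "a \<noteq> 0 \<Longrightarrow> b \<noteq> 0 \<Longrightarrow> G a b (Suc k) 1 \<noteq> 0"
  unfolding G_def by (intro pm_trace pm_mult pm_mpow pm_B1)

lemma alg1: fixes t s :: complex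
  assumes "t \<noteq> 0" "1 + s \<noteq> 0" "s^2 = 1 - 4/t^2"
  shows "(t - t * s)/2 = 2/(t*(1+s))"
proof -
  have "(t - t * s)/2 * (t*(1+s)) = t^2*(1 - s^2)/2" by (simp add: algebra_simps power2_eq_square)
  also have "\<dots> = 2" using assms by (simp add: field_simps)
  finally have "(t - t * s)/2 * (t*(1+s)) = 2" .
  moreover have "t*(1+s) \<noteq> 0" using assms by simp
  ultimately show ?thesis by (simp add: eq_divide_eq)
qed

theorem lemma3p3:
  fixes \<alpha> \<beta> :: real and N :: nat
  assumes "0 < \<alpha>" "\<alpha> < 1" "0 < \<beta>" "\<beta> < 1"
    and "even N" "N \<ge> 2"
  shows "is_pole (r1N \<alpha> \<beta> N) 1 \<and> zorder (r1N \<alpha> \<beta> N) 1 = - int (2 * N)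
       \<and> isolated_singularity_at (r2N \<alpha> \<beta> N) 1 \<and> not_essential (r2N \<alpha> \<beta> N) 1
       \<and> (\<exists>\<^sub>F z in at 1. r2N \<alpha> \<beta> N z \<noteq> 0)
       \<and> zorder (r2N \<alpha> \<beta> N) 1 = int (2 * N)"
proof -
  obtain k where k: "N = 2*k" using assms(5) by blast
  then obtain k' where k': "k = Suc k'" using assms(6) by (cases k) auto
  define g where "g = G \<alpha> \<beta> k"
  have gh: "g holomorphic_on (-{0})" unfolding g_def by (rule G_holo)
  have g1: "g 1 \<noteq> 0" unfolding g_def k' using assms by (intro G1_ne) auto
  have Npos: "N > 0" using assms by auto
  define u where "u z = 1 - 4*(z-1)^(4*N)/(g z)^2" for z
  have cg: "isCont g 1"
  proof -
    have o: "open (-{0::complex})" by auto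
    have "continuous_on (-{0}) g" using gh holomorphic_on_imp_continuous_on by blast
    then have "\<forall>x\<in>-{0}. isCont g x" using continuous_on_eq_continuous_at[OF o] by blast
    then show ?thesis by simp
  qed
  have cu: "isCont u 1" unfolding u_def using cg g1 by (auto intro!: continuous_intros)
  have u1: "u 1 = 1" using Npos by (simp add: u_def)
  have ev1: "eventually (\<lambda>z. g z \<noteq> 0) (at 1)"
    using cg g1 by (simp add: isCont_def tendsto_imp_eventually_ne)
  have ev2: "eventually (\<lambda>z. dist (u z) 1 < 1) (at 1)"
    using cu u1 by (metis isCont_def tendstoD zero_less_one)
  obtain d where d: "d > 0" "\<And>z. z \<noteq> 1 \<Longrightarrow> dist z 1 < d \<Longrightarrow> g z \<noteq> 0 \<and> dist (u z) 1 < 1"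
    using eventually_conj[OF ev1 ev2] unfolding eventually_at by auto
  define r where "r = min d (1/2)"
  define S where "S = ball (1::complex) r"
  have r: "r > 0" using d by (simp add: r_def)
  have S1: "1 \<in> S" "open S" using r by (auto simp: S_def)
  have PS: "g z \<noteq> 0 \<and> Re (u z) > 0 \<and> z \<noteq> 0" if "z \<in> S" for z
  proof -
    have dz: "dist z 1 < d" "dist z 1 < 1/2" using that by (auto simp: S_def r_def dist_commute)
    have "g z \<noteq> 0 \<and> dist (u z) 1 < 1"
      using d(2)[OF _ dz(1)] g1 u1 by (cases "z = 1") auto
    moreover have "Re (u z) > 0" if "dist (u z) 1 < 1"
    proof -
      have "\<bar>Re (u z - 1)\<bar> < 1" using abs_Re_le_cmod[of "u z - 1"] that by (simp add: dist_norm)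
      then show ?thesis by simp
    qed
    moreover have "z \<noteq> 0" using dz by auto
    ultimately show ?thesis by blast
  qed
  have S0: "S \<subseteq> -{0}" using PS by auto
  have gS: "g holomorphic_on S" using gh S0 holomorphic_on_subset by blast
  have uS: "u holomorphic_on S" unfolding u_def using gS PS by (auto intro!: holomorphic_intros)
  have sS: "(\<lambda>z. csqrt (u z)) holomorphic_on S"
    using uS PS by (intro holomorphic_on_csqrt') (fastforce simp: complex_nonpos_Reals_iff)+
  have den: "1 + csqrt w \<noteq> 0" for w
  proof -
    have "Re (1 + csqrt w) \<ge> 1" using Re_csqrt[of w] by (simp del: Re_csqrt)
    then show ?thesis by (metis zero_complex.sel(1) not_one_le_zero)
  qed
  define h1 where "h1 z = g z * (1 + csqrt (u z)) / 2" for z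
  define h2 where "h2 z = 2 / (g z * (1 + csqrt (u z)))" for z
  have h1S: "h1 holomorphic_on S" unfolding h1_def using gS sS by (auto intro!: holomorphic_intros)
  have h2S: "h2 holomorphic_on S" unfolding h2_def using gS sS PS den by (auto intro!: holomorphic_intros)
  have h11: "h1 1 \<noteq> 0" using g1 u1 by (simp add: h1_def)
  have h21: "h2 1 \<noteq> 0" using g1 u1 den by (simp add: h2_def)
  have tz: "tN \<alpha> \<beta> N z = g z / (z-1)^(2*N)" and uz: "1 - 4/(tN \<alpha> \<beta> N z)^2 = u z"
    if "z \<in> S" "z \<noteq> 1" for z
  proof -
    show t: "tN \<alpha> \<beta> N z = g z / (z-1)^(2*N)" using tN_eq[OF _ that(2) k] PS[OF that(1)] by (simp add: g_def)
    have e: "(z-1)^(4*N) = ((z-1)^(2*N))^2" by (simp flip: power_mult)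
    have p: "(z-1)^(2*N) \<noteq> 0" using that(2) by simp
    have gz: "g z \<noteq> 0" using PS[OF that(1)] by blast
    show "1 - 4/(tN \<alpha> \<beta> N z)^2 = u z" unfolding t u_def e using p gz
      by (simp add: power_divide)
  qed
  have r1eq: "r1N \<alpha> \<beta> N z = h1 z * (z-1) powi (- int (2*N))" if "z \<in> S" "z \<noteq> 1" for z
  proof -
    have "r1N \<alpha> \<beta> N z = (tN \<alpha> \<beta> N z + tN \<alpha> \<beta> N z * csqrt (u z)) / 2"
      using uz[OF that] by (simp add: r1N_def)
    moreover have pw: "(z-1) powi (- int (2*N)) = inverse ((z-1)^(2*N))"
      by (simp only: power_int_minus power_int_of_nat)
    ultimately show ?thesis using tz[OF that] that(2)
      by (simp only: pw) (simp add: h1_def field_simps)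
  qed
  have r2eq: "r2N \<alpha> \<beta> N z = h2 z * (z-1) powi (int (2*N))" if "z \<in> S" "z \<noteq> 1" for z
  proof -
    have tnz: "tN \<alpha> \<beta> N z \<noteq> 0" using tz[OF that] PS[OF that(1)] that(2) by simp
    have "r2N \<alpha> \<beta> N z = (tN \<alpha> \<beta> N z - tN \<alpha> \<beta> N z * csqrt (u z)) / 2"
      using uz[OF that] by (simp add: r2N_def)
    also have "\<dots> = 2 / (tN \<alpha> \<beta> N z * (1 + csqrt (u z)))"
      by (rule alg1[OF tnz den]) (simp add: uz[OF that])
    moreover have pw: "(z-1) powi (int (2*N)) = (z-1)^(2*N)"
      by (simp only: power_int_of_nat)
    ultimately show ?thesis using tz[OF that] that(2) PS[OF that(1)] den
      by (simp only: pw) (simp add: h2_def field_simps)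
  qed
  have evS: "eventually P (at 1)" if "\<And>w. w \<in> S \<Longrightarrow> w \<noteq> 1 \<Longrightarrow> P w" for P
    unfolding eventually_at_topological using S1 that by blast
  have Z1: "zorder (r1N \<alpha> \<beta> N) 1 = - int (2 * N)"
    by (rule zorder_eqI[OF S1(2) S1(1) h1S h11]) (use r1eq in blast)
  have P1: "is_pole (r1N \<alpha> \<beta> N) 1"
  proof -
    have "is_pole (\<lambda>w. h1 w / (w-1)^(2*N)) 1"
      using is_pole_basic[OF h1S S1(2) S1(1) h11] Npos by simp
    moreover have "eventually (\<lambda>w. h1 w / (w-1)^(2*N) = r1N \<alpha> \<beta> N w) (at 1)"
    proof (rule evS)
      fix w assume w: "w \<in> S" "w \<noteq> 1"
      have pw: "(w-1) powi (- int (2*N)) = inverse ((w-1)^(2*N))"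
        by (simp only: power_int_minus power_int_of_nat)
      have "r1N \<alpha> \<beta> N w = h1 w * (w-1) powi (- int (2*N))" using w r1eq[of w] by blast
      then show "h1 w / (w-1)^(2*N) = r1N \<alpha> \<beta> N w" by (simp only: pw divide_inverse)
    qed
    ultimately show ?thesis using is_pole_transform by blast
  qed
  have Z2: "zorder (r2N \<alpha> \<beta> N) 1 = int (2 * N)"
    by (rule zorder_eqI[OF S1(2) S1(1) h2S h21]) (use r2eq in blast)
  define F where "F w = h2 w * (w-1)^(2*N)" for w
  have FS: "F holomorphic_on S" unfolding F_def using h2S by (auto intro!: holomorphic_intros)
  have evF: "eventually (\<lambda>w. F w = r2N \<alpha> \<beta> N w) (at 1)"
  proof (rule evS)
    fix w assume w: "w \<in> S" "w \<noteq> 1"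
    have pw: "(w-1) powi (int (2*N)) = (w-1)^(2*N)"
      by (simp only: power_int_of_nat)
    have "r2N \<alpha> \<beta> N w = h2 w * (w-1) powi (int (2*N))" using w r2eq[of w] by blast
    then show "F w = r2N \<alpha> \<beta> N w" by (simp only: pw F_def)
  qed
  have I2: "isolated_singularity_at (r2N \<alpha> \<beta> N) 1"
  proof -
    have "isolated_singularity_at F 1" unfolding isolated_singularity_at_def
    proof (intro exI[of _ r] conjI)
      show "0 < r" by (rule r)
      have "F holomorphic_on ball 1 r - {1}" using FS by (auto simp: S_def intro: holomorphic_on_subset)
      then show "F analytic_on ball 1 r - {1}" by (simp add: analytic_on_open open_delete)
    qed
    then show ?thesis using evF isolated_singularity_at_transform by blast
  qed
  have N2: "not_essential (r2N \<alpha> \<beta> N) 1"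
  proof -
    have "isCont F 1" using FS S1 holomorphic_on_imp_continuous_on continuous_on_eq_continuous_at by blast
    then have "not_essential F 1" unfolding not_essential_def isCont_def by blast
    then show ?thesis using evF not_essential_transform by blast
  qed
  have Fr2: "\<exists>\<^sub>F z in at 1. r2N \<alpha> \<beta> N z \<noteq> 0"
  proof (rule eventually_frequently)
    show "at (1::complex) \<noteq> bot" by simp
    show "eventually (\<lambda>z. r2N \<alpha> \<beta> N z \<noteq> 0) (at 1)"
    proof (rule evS)
      fix w assume w: "w \<in> S" "w \<noteq> 1"
      have pw: "(w-1) powi (int (2*N)) = (w-1)^(2*N)"
        by (simp only: power_int_of_nat)
      have "r2N \<alpha> \<beta> N w = h2 w * (w-1) powi (int (2*N))" using w r2eq[of w] by blast
      moreover have "h2 w \<noteq> 0" using PS[OF w(1)] den by (simp add: h2_def)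
      ultimately show "r2N \<alpha> \<beta> N w \<noteq> 0" using w(2) by (simp only: pw) simp
    qed
  qed
  show ?thesis using Z1 P1 Z2 I2 N2 Fr2 by blast
qed
end
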